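(* Let $\mathbf{A}=(A,\mathcal{R})$ and $\mathbf{B}=(B,\mathcal{S})$ be $\mathbf{K}$-objects and $f:\mathbf{A}\to\mathbf{B}$ a $\mathbf{K}$-morphism. Then the family $\Phi f$ with components $(\Phi f)_X:(\Phi\mathbf{B})X\to(\Phi\mathbf{A})X$, $(\Phi f)_X(g/\!\approx_{\mathbf{B}})=gf/\!\approx_{\mathbf{A}}$ for $g:B\to X$, is a well-defined natural transformation $\Phi\mathbf{B}\to\Phi\mathbf{A}$.
   Context: $\mathbf{T}$ is the category whose objects are pairs $(A,\mathcal{R})$ with $A$ a set and $\mathcal{R}$ a family of subsets of $A$, and whose morphisms $f:(A,\mathcal{R})\to(B,\mathcal{S})$ are maps $f:A\to B$ with $f^{-1}[S]\in\mathcal{R}$ for all $S\in\mathcal{S}$. Fix a simple graph with vertex set $V=\{v_1,\dots,v_6\}$ and edge set $\mathcal{G}$ (two-element subsets of $V$) with no non-identity automorphism. For a $\mathbf{T}$-object $(A,\mathcal{R})$ let $\Psi(A,\mathcal{R})=(\overline{A},\overline{\mathcal{R}})$ with $\overline{A}=A\sqcup V$ and $\overline{\mathcal{R}}$ consisting of $\{v_i\}$, $\overline{A}\setminus\{v_i\}$ ($i=1,\dots,6$), $G$, $\overline{A}\setminus G$ ($G\in\mathcal{G}$), and $\{v_1,v_2,v_3\}\cup R$, $\{v_4,v_5,v_6\}\cup(A\setminus R)$ ($R\in\mathcal{R}$); for a map $f$ let $\Psi f=f\sqcup\mathrm{id}_V$. $\mathbf{K}$ is the full subcategory of $\mathbf{T}$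 on the objects of the form $\Psi(A,\mathcal{R})$. For a $\mathbf{K}$-object $\mathbf{A}=(A,\mathcal{R})$ and a set $X$, let $\approx_{\mathbf{A}}$ be the relation on maps $A\to X$ given by $g_1\approx_{\mathbf{A}}g_2$ iff $g_1=g_2$, or $g_1[A]=g_2[A]$ is a two-element set $\{x,x'\}$ and $g_1^{-1}[\{x\}]=g_2^{-1}[\{x'\}]\in\mathcal{R}$ (this is an equivalence relation). The set functor $\Phi\mathbf{A}$ is given by $(\Phi\mathbf{A})X=\{g\,;\,g:A\to X\}/\!\approx_{\mathbf{A}}$ and $((\Phi\mathbf{A})h)(g/\!\approx_{\mathbf{A}})=hg/\!\approx_{\mathbf{A}}$ for $h:X\to Y$. *)

theory Defs
  imports "HOL-Library.FuncSet"
begin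

definition Vset :: "(nat \<Rightarrow> 'v) \<Rightarrow> 'v set" where
  "Vset v = v ` {1..6}"

definition rigid_graph :: "(nat \<Rightarrow> 'v) \<Rightarrow> 'v set set \<Rightarrow> bool" where
  "rigid_graph v G \<longleftrightarrow>
     inj_on v {1..6} \<and>
     (\<forall>e\<in>G. e \<subseteq> Vset v \<and> card e = 2) \<and>
     (\<forall>\<sigma>. bij_betw \<sigma> (Vset v) (Vset v) \<and> (\<lambda>e. \<sigma> ` e) ` G = G
           \<longrightarrow> (\<forall>x\<in>Vset v. \<sigma> x = x))"

definition Tobj :: "'a set \<Rightarrow> 'a set set \<Rightarrow> bool" where
  "Tobj A R \<longleftrightarrow> R \<subseteq> Pow A"

definition Tmor :: "'a set \<Rightarrow> 'a set set \<Rightarrow> 'b set \<Rightarrow> 'b set set \<Rightarrow> ('a \<Rightarrow> 'b) \<Rightarrow> bool" where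
  "Tmor A R B S f \<longleftrightarrow> f \<in> A \<rightarrow> B \<and> (\<forall>S'\<in>S. {a\<in>A. f a \<in> S'} \<in> R)"

text \<open>The functor Psi on objects; the disjoint union A + V is realised with Inl/Inr.\<close>

definition Psi_car :: "(nat \<Rightarrow> 'v) \<Rightarrow> 'a set \<Rightarrow> ('a + 'v) set" where
  "Psi_car v A0 = Inl ` A0 \<union> Inr ` Vset v"

definition Psi_fam :: "(nat \<Rightarrow> 'v) \<Rightarrow> 'v set set \<Rightarrow> 'a set \<Rightarrow> 'a set set \<Rightarrow> ('a + 'v) set set" where
  "Psi_fam v G A0 R0 =
     {{Inr (v i)} | i. i \<in> {1..6}}
   \<union> {Psi_car v A0 - {Inr (v i)} | i. i \<in> {1..6}}
   \<union> {Inr ` e | e. e \<in> G}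
   \<union> {Psi_car v A0 - Inr ` e | e. e \<in> G}
   \<union> {Inr ` {v 1, v 2, v 3} \<union> Inl ` R | R. R \<in> R0}
   \<union> {Inr ` {v 4, v 5, v 6} \<union> Inl ` (A0 - R) | R. R \<in> R0}"

text \<open>K-objects: the objects of the form Psi(A0, R0) for a T-object (A0, R0).
  K is full, so K-morphisms are exactly T-morphisms between K-objects.\<close>

definition Kobj :: "(nat \<Rightarrow> 'v) \<Rightarrow> 'v set set \<Rightarrow> ('a + 'v) set \<Rightarrow> ('a + 'v) set set \<Rightarrow> bool" where
  "Kobj v G A R \<longleftrightarrow> (\<exists>A0 R0. Tobj A0 R0 \<and> A = Psi_car v A0 \<and> R = Psi_fam v G A0 R0)"

text \<open>Maps A \<rightarrow> X are represented by extensional functions (A ->E X).\<close>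

definition approx :: "'a set \<Rightarrow> 'a set set \<Rightarrow> ('a \<Rightarrow> 'x) \<Rightarrow> ('a \<Rightarrow> 'x) \<Rightarrow> bool" where
  "approx A R g1 g2 \<longleftrightarrow> g1 = g2 \<or>
     (\<exists>x x'. x \<noteq> x' \<and> g1 ` A = {x, x'} \<and> g2 ` A = {x, x'} \<and>
        {a\<in>A. g1 a = x} = {a\<in>A. g2 a = x'} \<and> {a\<in>A. g1 a = x} \<in> R)"

definition cls :: "'a set \<Rightarrow> 'a set set \<Rightarrow> 'x set \<Rightarrow> ('a \<Rightarrow> 'x) \<Rightarrow> ('a \<Rightarrow> 'x) set" where
  "cls A R X g = {g' \<in> A \<rightarrow>\<^sub>E X. approx A R g g'}"

definition PhiObj :: "'a set \<Rightarrow> 'a set set \<Rightarrow> 'x set \<Rightarrow> ('a \<Rightarrow> 'x) set set" where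
  "PhiObj A R X = cls A R X ` (A \<rightarrow>\<^sub>E X)"

text \<open>((Phi A) h)(g/approx) = hg/approx, for h : X \<rightarrow> Y.\<close>
definition PhiMap :: "'a set \<Rightarrow> 'a set set \<Rightarrow> 'y set \<Rightarrow> ('x \<Rightarrow> 'y) \<Rightarrow> ('a \<Rightarrow> 'x) set \<Rightarrow> ('a \<Rightarrow> 'y) set" where
  "PhiMap A R Y h c = (THE c'. \<exists>g\<in>c. c' = cls A R Y (compose A h g))"

definition PhiMor :: "'a set \<Rightarrow> 'a set set \<Rightarrow> 'x set \<Rightarrow> ('a \<Rightarrow> 'b) \<Rightarrow> ('b \<Rightarrow> 'x) set \<Rightarrow> ('a \<Rightarrow> 'x) set" where
  "PhiMor A R X f c = (THE c'. \<exists>g\<in>c. c' = cls A R X (compose A g f))"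

end

theory Submission
  imports Defs
begin

lemma approx_refl: "approx A R g g"
  unfolding approx_def by simp

lemma approx_sym: "approx A R g1 g2 \<Longrightarrow> approx A R g2 g1"
  unfolding approx_def
  apply (elim disjE exE conjE)
   apply simp
  apply (rule disjI2)
  subgoal for x x'
    apply (rule exI[of _ x'], rule exI[of _ x]) by auto
  done

lemma approx_trans:
  assumes e1: "g1 \<in> extensional A" and e3: "g3 \<in> extensional A"
    and a12: "approx A R g1 g2" and a23: "approx A R g2 g3"
  shows "approx A R g1 g3"
proof (cases "g1 = g2")
  case True then show ?thesis using a23 by simp
next
  case n12: False
  show ?thesis
  proof (cases "g2 = g3")
    case True then show ?thesis using a12 by simp
  next
    case False
    from a12 n12 obtain x x' where h1: "x \<noteq> x'" "g1 ` A = {x, x'}" "g2 ` A = {x, x'}"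
      "{a\<in>A. g1 a = x} = {a\<in>A. g2 a = x'}" unfolding approx_def by blast
    from a23 False obtain y y' where h2: "y \<noteq> y'" "g2 ` A = {y, y'}" "g3 ` A = {y, y'}"
      "{a\<in>A. g2 a = y} = {a\<in>A. g3 a = y'}" unfolding approx_def by blast
    have yy: "(y = x \<and> y' = x') \<or> (y = x' \<and> y' = x)"
    proof -
      have "{x, x'} = {y, y'}" using h1(3) h2(2) by simp
      then show ?thesis by (simp add: doubleton_eq_iff) blast
    qed
    have "\<forall>a\<in>A. g1 a = g3 a"
    proof
      fix a assume a: "a \<in> A"
      have g1a: "g1 a = x \<or> g1 a = x'" using h1(2) a by blast
      have g2a: "g2 a = x \<or> g2 a = x'" using h1(3) a by blast
      have g3a: "g3 a = x \<or> g3 a = x'" using h2(3) yy a by blast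
      have s1: "g1 a = x \<longleftrightarrow> g2 a = x'" using h1(4) a by blast
      have s2: "g2 a = y \<longleftrightarrow> g3 a = y'" using h2(4) a by blast
      show "g1 a = g3 a" using yy
      proof
        assume "y = x \<and> y' = x'"
        then show ?thesis using g1a g2a g3a s1 s2 h1(1) by metis
      next
        assume "y = x' \<and> y' = x"
        then show ?thesis using g1a g2a g3a s1 s2 h1(1) by metis
      qed
    qed
    then have "g1 = g3" using e1 e3 by (metis extensionalityI)
    then show ?thesis by (simp add: approx_refl)
  qed
qed

lemma cls_eq:
  assumes g: "g \<in> A \<rightarrow>\<^sub>E X" and g': "g' \<in> A \<rightarrow>\<^sub>E X" and ap: "approx A R g g'"
  shows "cls A R X g = cls A R X g'"
proof -
  have eg: "g \<in> extensional A" and eg': "g' \<in> extensional A" using g g' by (simp_all add: PiE_iff)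
  have "approx A R g h \<longleftrightarrow> approx A R g' h" if h: "h \<in> A \<rightarrow>\<^sub>E X" for h
  proof
    have eh: "h \<in> extensional A" using h by (simp add: PiE_iff)
    assume "approx A R g h"
    then show "approx A R g' h" using approx_trans[OF eg' eh approx_sym[OF ap]] by blast
  next
    have eh: "h \<in> extensional A" using h by (simp add: PiE_iff)
    assume "approx A R g' h"
    then show "approx A R g h" using approx_trans[OF eg eh ap] by blast
  qed
  then show ?thesis unfolding cls_def by blast
qed

lemma the_cls:
  assumes "g \<in> c" "\<And>g'. g' \<in> c \<Longrightarrow> F g' = F g"
  shows "(THE c'. \<exists>g'\<in>c. c' = F g') = F g"
proof (rule the_equality)
  show "\<exists>g'\<in>c. F g = F g'" using assms(1) by blast
next
  fix c' assume "\<exists>g'\<in>c. c' = F g'"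
  then obtain g' where "g' \<in> c" "c' = F g'" by blast
  then show "c' = F g" using assms(2) by simp
qed

lemma approx_post:
  assumes "approx B S g g'"
  shows "approx B S (compose B h g) (compose B h g')"
proof (cases "g = g'")
  case True then show ?thesis by (simp add: approx_refl)
next
  case False
  from assms False obtain x x' where h1: "x \<noteq> x'" "g ` B = {x, x'}" "g' ` B = {x, x'}"
    "{a\<in>B. g a = x} = {a\<in>B. g' a = x'}" "{a\<in>B. g a = x} \<in> S" unfolding approx_def by blast
  have ga: "\<And>b. b \<in> B \<Longrightarrow> (g b = x \<or> g b = x')" using h1(2) by blast
  have g'a: "\<And>b. b \<in> B \<Longrightarrow> (g' b = x \<or> g' b = x')" using h1(3) by blast
  have s: "\<And>b. b \<in> B \<Longrightarrow> (g b = x \<longleftrightarrow> g' b = x')" using h1(4) by blast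
  show ?thesis
  proof (cases "h x = h x'")
    case True
    have "compose B h g = compose B h g'"
    proof (intro ext)
      fix b show "compose B h g b = compose B h g' b"
        unfolding compose_def restrict_def using ga[of b] g'a[of b] True by auto
    qed
    then show ?thesis by (simp add: approx_refl)
  next
    case hne: False
    have i1: "compose B h g ` B = {h x, h x'}"
    proof -
      have "compose B h g ` B = (\<lambda>b. h (g b)) ` B" by (rule image_cong) (simp_all add: compose_def)
      also have "\<dots> = h ` (g ` B)" by (simp add: image_image)
      finally show ?thesis using h1(2) by simp
    qed
    have i2: "compose B h g' ` B = {h x, h x'}"
    proof -
      have "compose B h g' ` B = (\<lambda>b. h (g' b)) ` B" by (rule image_cong) (simp_all add: compose_def)
      also have "\<dots> = h ` (g' ` B)" by (simp add: image_image)
      finally show ?thesis using h1(3) by simp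
    qed
    have q1: "compose B h g b = h x \<longleftrightarrow> g b = x" if "b \<in> B" for b
      using ga[OF that] hne that by (auto simp: compose_def)
    have q2: "compose B h g' b = h x' \<longleftrightarrow> g' b = x'" if "b \<in> B" for b
      using g'a[OF that] hne that by (auto simp: compose_def)
    have p1: "{a\<in>B. compose B h g a = h x} = {a\<in>B. g a = x}" using q1 by blast
    have p2: "{a\<in>B. compose B h g' a = h x'} = {a\<in>B. g' a = x'}" using q2 by blast
    show ?thesis unfolding approx_def
      apply (rule disjI2, rule exI[of _ "h x"], rule exI[of _ "h x'"])
      using hne i1 i2 p1 p2 h1(4) h1(5) by simp
  qed
qed

lemma approx_pre:
  assumes f: "f \<in> A \<rightarrow> B" and fS: "\<forall>Y\<in>S. {a\<in>A. f a \<in> Y} \<in> R"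
    and R: "\<forall>Y\<in>R. Y \<noteq> {} \<and> Y \<noteq> A"
    and ap: "approx B S g g'"
  shows "approx A R (compose A g f) (compose A g' f)"
proof (cases "g = g'")
  case True then show ?thesis by (simp add: approx_refl)
next
  case False
  from ap False obtain x x' where h1: "x \<noteq> x'" "g ` B = {x, x'}" "g' ` B = {x, x'}"
    "{a\<in>B. g a = x} = {a\<in>B. g' a = x'}" "{a\<in>B. g a = x} \<in> S" unfolding approx_def by blast
  define P where "P = {a\<in>B. g a = x}"
  define Q where "Q = {a\<in>A. f a \<in> P}"
  have QR: "Q \<in> R" using fS h1(5) unfolding Q_def P_def by blast
  then have "Q \<noteq> {}" "Q \<noteq> A" using R by auto
  moreover have "Q \<subseteq> A" unfolding Q_def by auto
  ultimately obtain a1 a2 where a1: "a1 \<in> A" "f a1 \<in> P" and a2: "a2 \<in> A" "f a2 \<notin> P"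
    unfolding Q_def by blast
  have ga: "\<And>b. b \<in> B \<Longrightarrow> (g b = x \<or> g b = x')" using h1(2) by blast
  have g'a: "\<And>b. b \<in> B \<Longrightarrow> (g' b = x \<or> g' b = x')" using h1(3) by blast
  have s: "\<And>b. b \<in> B \<Longrightarrow> (g b = x \<longleftrightarrow> g' b = x')" using h1(4) by blast
  have fa: "\<And>a. a \<in> A \<Longrightarrow> f a \<in> B" using f by auto
  have v1: "g (f a1) = x" "g' (f a1) = x'" using a1 fa s unfolding P_def by auto
  have v2: "g (f a2) = x'" "g' (f a2) = x" using a2 fa s ga g'a h1(1) unfolding P_def by auto
  have i1: "compose A g f ` A = {x, x'}"
  proof
    show "compose A g f ` A \<subseteq> {x, x'}" using ga fa unfolding compose_def by auto
    have "compose A g f a1 = x" "compose A g f a2 = x'" using v1 v2 a1 a2 unfolding compose_def by auto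
    then show "{x, x'} \<subseteq> compose A g f ` A" using a1 a2 by (metis image_eqI insert_subset empty_subsetI)
  qed
  have i2: "compose A g' f ` A = {x, x'}"
  proof
    show "compose A g' f ` A \<subseteq> {x, x'}" using g'a fa unfolding compose_def by auto
    have "compose A g' f a1 = x'" "compose A g' f a2 = x" using v1 v2 a1 a2 unfolding compose_def by auto
    then show "{x, x'} \<subseteq> compose A g' f ` A" using a1 a2 by (metis image_eqI insert_subset empty_subsetI)
  qed
  have p1: "{a\<in>A. compose A g f a = x} = Q"
    unfolding Q_def P_def compose_def using fa by auto
  have p2: "{a\<in>A. compose A g' f a = x'} = Q"
    unfolding Q_def P_def compose_def using fa s by auto
  show ?thesis unfolding approx_def
    apply (rule disjI2, rule exI[of _ x], rule exI[of _ x'])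
    using h1(1) i1 i2 p1 p2 QR by simp
qed

lemma Kobj_R:
  assumes rg: "rigid_graph v G" and K: "Kobj v G A R"
  shows "\<forall>Y\<in>R. Y \<noteq> {} \<and> Y \<noteq> A"
proof -
  obtain A0 R0 where A: "A = Psi_car v A0" and R: "R = Psi_fam v G A0 R0" and T: "Tobj A0 R0"
    using K unfolding Kobj_def by blast
  have inj: "inj_on v {1..6}" and GG: "\<forall>e\<in>G. e \<subseteq> Vset v \<and> card e = 2"
    using rg unfolding rigid_graph_def by auto
  have vne: "\<And>i j. i \<in> {1..6} \<Longrightarrow> j \<in> {1..6} \<Longrightarrow> i \<noteq> j \<Longrightarrow> v i \<noteq> v j"
    using inj unfolding inj_on_def by blast
  have inV: "\<And>i. i \<in> {1..6} \<Longrightarrow> Inr (v i) \<in> A" unfolding A Psi_car_def Vset_def by auto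
  show ?thesis
  proof
    fix Y assume Y: "Y \<in> R"
    then consider
        (a) i where "i \<in> {1..6::nat}" "Y = {Inr (v i)}"
      | (b) i where "i \<in> {1..6::nat}" "Y = A - {Inr (v i)}"
      | (c) e where "e \<in> G" "Y = Inr ` e"
      | (d) e where "e \<in> G" "Y = A - Inr ` e"
      | (e) R1 where "Y = Inr ` {v 1, v 2, v 3} \<union> Inl ` R1"
      | (f) R1 where "Y = Inr ` {v 4, v 5, v 6} \<union> Inl ` (A0 - R1)"
    proof -
      have Y': "Y \<in> Psi_fam v G A0 R0" using Y R by simp
      show ?thesis using Y' unfolding Psi_fam_def A[symmetric]
        by (elim UnE CollectE exE conjE) (metis that)+
    qed
    then show "Y \<noteq> {} \<and> Y \<noteq> A"
    proof cases
      case (a i)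
      obtain j where j: "j \<in> {1..6::nat}" "j \<noteq> i" using a(1)
        by (cases "i = 1") force+
      have "Inr (v j) \<in> A" "Inr (v j) \<notin> Y" using inV[OF j(1)] vne[OF j(1) a(1) j(2)] a(2) by auto
      then show ?thesis using a by auto
    next
      case (b i)
      obtain j where j: "j \<in> {1..6::nat}" "j \<noteq> i" using b(1)
        by (cases "i = 1") force+
      have "Inr (v j) \<in> Y" using inV[OF j(1)] vne[OF j(1) b(1) j(2)] b(2) by auto
      then show ?thesis using b inV by auto
    next
      case (c e)
      have ce: "card e = 2" "e \<subseteq> Vset v" using GG c(1) by auto
      then have "e \<noteq> {}" by auto
      have "card (v ` {1..6}) = 6" using card_image[OF inj] by simp
      then have "\<not> Vset v \<subseteq> e" using ce unfolding Vset_def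
        using subset_antisym by fastforce
      then obtain w where "w \<in> Vset v" "w \<notin> e" by auto
      then have "Inr w \<in> A" "Inr w \<notin> Y" unfolding A Psi_car_def c(2) by auto
      then show ?thesis using c \<open>e \<noteq> {}\<close> by auto
    next
      case (d e)
      have ce: "card e = 2" "e \<subseteq> Vset v" using GG d(1) by auto
      then obtain w where "w \<in> e" by fastforce
      then have w: "Inr w \<in> A" "Inr w \<notin> Y" unfolding A Psi_car_def d(2) using ce by auto
      have "card (v ` {1..6}) = 6" using card_image[OF inj] by simp
      then have "\<not> Vset v \<subseteq> e" using ce unfolding Vset_def
        using subset_antisym by fastforce
      then obtain u where "u \<in> Vset v" "u \<notin> e" by auto
      then have "Inr u \<in> Y" unfolding A Psi_car_def d(2) by auto
      then show ?thesis using w by auto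
    next
      case (e R1)
      have "v 4 \<noteq> v 1" "v 4 \<noteq> v 2" "v 4 \<noteq> v 3" using vne by auto
      then have "Inr (v 4) \<notin> Y" using e by auto
      then show ?thesis using e inV[of 4] by auto
    next
      case (f R1)
      have "v 1 \<noteq> v 4" "v 1 \<noteq> v 5" "v 1 \<noteq> v 6" using vne by auto
      then have "Inr (v 1) \<notin> Y" using f by auto
      then show ?thesis using f inV[of 1] by auto
    qed
  qed
qed

theorem lemma3p4:
  fixes v :: "nat \<Rightarrow> 'v" and G :: "'v set set"
    and A :: "('a + 'v) set" and R :: "('a + 'v) set set"
    and B :: "('b + 'v) set" and S :: "('b + 'v) set set"
    and f :: "'a + 'v \<Rightarrow> 'b + 'v"
  assumes "rigid_graph v G"
    and "Kobj v G A R" and "Kobj v G B S"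
    and "Tmor A R B S f"
  shows "(\<forall>(X::'x set). \<forall>g\<in>B \<rightarrow>\<^sub>E X.
            PhiMor A R X f (cls B S X g) = cls A R X (compose A g f))
       \<and> (\<forall>(X::'x set). \<forall>c\<in>PhiObj B S X. PhiMor A R X f c \<in> PhiObj A R X)
       \<and> (\<forall>(X::'x set) (Y::'y set) h. h \<in> X \<rightarrow> Y \<longrightarrow>
            (\<forall>c\<in>PhiObj B S X.
               PhiMor A R Y f (PhiMap B S Y h c) = PhiMap A R Y h (PhiMor A R X f c)))"
proof -
  have f: "f \<in> A \<rightarrow> B" and fS: "\<forall>Y\<in>S. {a\<in>A. f a \<in> Y} \<in> R"
    using assms(4) unfolding Tmor_def by auto
  have RR: "\<forall>Y\<in>R. Y \<noteq> {} \<and> Y \<noteq> A" using Kobj_R[OF assms(1,2)] .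
  have compE: "\<And>(g::'b+'v \<Rightarrow> 'z) Z. g \<in> B \<rightarrow>\<^sub>E Z \<Longrightarrow> compose A g f \<in> A \<rightarrow>\<^sub>E Z"
    using f unfolding compose_def by auto
  have P1: "\<And>(X::'z set) g. g \<in> B \<rightarrow>\<^sub>E X \<Longrightarrow>
            PhiMor A R X f (cls B S X g) = cls A R X (compose A g f)"
  proof -
    fix X :: "'z set" and g assume g: "g \<in> B \<rightarrow>\<^sub>E X"
    show "PhiMor A R X f (cls B S X g) = cls A R X (compose A g f)"
      unfolding PhiMor_def
    proof (rule the_cls)
      show "g \<in> cls B S X g" using g by (simp add: cls_def approx_refl)
      fix g' assume "g' \<in> cls B S X g"
      then have g': "g' \<in> B \<rightarrow>\<^sub>E X" "approx B S g g'" unfolding cls_def by auto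
      show "cls A R X (compose A g' f) = cls A R X (compose A g f)"
        using cls_eq[OF compE[OF g] compE[OF g'(1)] approx_pre[OF f fS RR g'(2)]] by simp
    qed
  qed
  have PM: "\<And>(X::'x set) (Y::'y set) h g. h \<in> X \<rightarrow> Y \<Longrightarrow> g \<in> B \<rightarrow>\<^sub>E X \<Longrightarrow>
      PhiMap B S Y h (cls B S X g) = cls B S Y (compose B h g)"
  proof -
    fix X :: "'x set" and Y :: "'y set" and h g
    assume h: "h \<in> X \<rightarrow> Y" and g: "g \<in> B \<rightarrow>\<^sub>E X"
    have hE: "\<And>g. g \<in> B \<rightarrow>\<^sub>E X \<Longrightarrow> compose B h g \<in> B \<rightarrow>\<^sub>E Y"
      using h unfolding compose_def by auto
    show "PhiMap B S Y h (cls B S X g) = cls B S Y (compose B h g)"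
      unfolding PhiMap_def
    proof (rule the_cls)
      show "g \<in> cls B S X g" using g by (simp add: cls_def approx_refl)
      fix g' assume "g' \<in> cls B S X g"
      then have g': "g' \<in> B \<rightarrow>\<^sub>E X" "approx B S g g'" unfolding cls_def by auto
      show "cls B S Y (compose B h g') = cls B S Y (compose B h g)"
        using cls_eq[OF hE[OF g] hE[OF g'(1)] approx_post[OF g'(2)]] by simp
    qed
  qed
  have PMA: "\<And>(X::'x set) (Y::'y set) h g. h \<in> X \<rightarrow> Y \<Longrightarrow> g \<in> A \<rightarrow>\<^sub>E X \<Longrightarrow>
      PhiMap A R Y h (cls A R X g) = cls A R Y (compose A h g)"
  proof -
    fix X :: "'x set" and Y :: "'y set" and h g
    assume h: "h \<in> X \<rightarrow> Y" and g: "g \<in> A \<rightarrow>\<^sub>E X"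
    have hE: "\<And>g. g \<in> A \<rightarrow>\<^sub>E X \<Longrightarrow> compose A h g \<in> A \<rightarrow>\<^sub>E Y"
      using h unfolding compose_def by auto
    show "PhiMap A R Y h (cls A R X g) = cls A R Y (compose A h g)"
      unfolding PhiMap_def
    proof (rule the_cls)
      show "g \<in> cls A R X g" using g by (simp add: cls_def approx_refl)
      fix g' assume "g' \<in> cls A R X g"
      then have g': "g' \<in> A \<rightarrow>\<^sub>E X" "approx A R g g'" unfolding cls_def by auto
      show "cls A R Y (compose A h g') = cls A R Y (compose A h g)"
        using cls_eq[OF hE[OF g] hE[OF g'(1)] approx_post[OF g'(2)]] by simp
    qed
  qed
  show ?thesis
  proof (intro conjI allI ballI impI)
    fix X :: "'x set" and g assume "g \<in> B \<rightarrow>\<^sub>E X"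
    then show "PhiMor A R X f (cls B S X g) = cls A R X (compose A g f)" by (rule P1)
  next
    fix X :: "'x set" and c assume "c \<in> PhiObj B S X"
    then obtain g where g: "g \<in> B \<rightarrow>\<^sub>E X" "c = cls B S X g" unfolding PhiObj_def by auto
    show "PhiMor A R X f c \<in> PhiObj A R X"
      using P1[OF g(1)] g(2) compE[OF g(1)] unfolding PhiObj_def by auto
  next
    fix X :: "'x set" and Y :: "'y set" and h c
    assume h: "h \<in> X \<rightarrow> Y" and "c \<in> PhiObj B S X"
    then obtain g where g: "g \<in> B \<rightarrow>\<^sub>E X" "c = cls B S X g" unfolding PhiObj_def by auto
    have hg: "compose B h g \<in> B \<rightarrow>\<^sub>E Y" using h g(1) unfolding compose_def by auto
    have eq: "compose A (compose B h g) f = compose A h (compose A g f)"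
      using f unfolding compose_def by (intro ext) auto
    show "PhiMor A R Y f (PhiMap B S Y h c) = PhiMap A R Y h (PhiMor A R X f c)"
      unfolding g(2) PM[OF h g(1)] P1[OF hg] P1[OF g(1)] PMA[OF h compE[OF g(1)]] eq ..
  qed
qed

end
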